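(* Let $X$ be a topological space such that the diagonal $\Delta X=\{(x,x):x\in X\}$ is statistically closed in $X\times X$. Then every statistically compact subspace of $X$ is statistically closed in $X$.
   Context: For $A\subseteq\mathbb{N}$ let $d_n(A)=|A\cap\{1,\dots,n\}|/n$, $\overline{d}(A)=\limsup_n d_n(A)$, $\underline{d}(A)=\liminf_n d_n(A)$, and $d(A)$ their common value when equal. A sequence in $X$ is a map from an infinite subset $M\subseteq\mathbb{N}$ into $X$, written $(x_n)_{n\in M}$; a subsequence is $(x_n)_{n\in N}$ with $N\subseteq M$ infinite. It is nonthin if $\overline{d}(M)>0$. A nonthin sequence $(x_n)_{n\in M}$ is statistically convergent to $a\in X$ if for every open $U\ni a$, $d(\{n\in M:x_n\notin U\})=0$. The statistical closure $\overline{F}^{ST}$ of $F\subseteq X$ is the set of $x\in X$ such that some nonthin sequence in $F$ is statistically convergent to $x$; $F$ is statistically closed if $\overline{F}^{ST}=F$. A topological space is statistically compact if every nonthin sequence in it has a nonthin subsequence that is statistically convergent to some point of the space; a subset is statistically compact if it is so in the subspace topology. *)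

theory Defs
  imports "HOL-Analysis.Analysis"
begin

definition dens_n :: "nat set \<Rightarrow> nat \<Rightarrow> real" where
  "dens_n A n = real (card (A \<inter> {1..n})) / real n"

definition upper_density :: "nat set \<Rightarrow> ereal" where
  "upper_density A = limsup (\<lambda>n. ereal (dens_n A n))"

definition density_zero :: "nat set \<Rightarrow> bool" where
  "density_zero A \<longleftrightarrow> (\<lambda>n. dens_n A n) \<longlonglongrightarrow> 0"

definition nonthin :: "nat set \<Rightarrow> bool" where
  "nonthin M \<longleftrightarrow> infinite M \<and> upper_density M > 0"

text \<open>the nonthin sequence (x_n)_{n\<in>M} is statistically convergent to a in the space X\<close>
definition stat_conv :: "'a topology \<Rightarrow> (nat \<Rightarrow> 'a) \<Rightarrow> nat set \<Rightarrow> 'a \<Rightarrow> bool" where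
  "stat_conv X x M a \<longleftrightarrow> nonthin M \<and> (\<forall>n\<in>M. x n \<in> topspace X) \<and> a \<in> topspace X \<and>
     (\<forall>U. openin X U \<and> a \<in> U \<longrightarrow> density_zero {n \<in> M. x n \<notin> U})"

definition stat_closure :: "'a topology \<Rightarrow> 'a set \<Rightarrow> 'a set" where
  "stat_closure X F = {a \<in> topspace X. \<exists>x M. nonthin M \<and> (\<forall>n\<in>M. x n \<in> F) \<and> stat_conv X x M a}"

definition stat_closed :: "'a topology \<Rightarrow> 'a set \<Rightarrow> bool" where
  "stat_closed X F \<longleftrightarrow> stat_closure X F = F"

definition stat_compact :: "'a topology \<Rightarrow> bool" where
  "stat_compact X \<longleftrightarrow> (\<forall>x M. nonthin M \<and> (\<forall>n\<in>M. x n \<in> topspace X) \<longrightarrow>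
     (\<exists>N. N \<subseteq> M \<and> nonthin N \<and> (\<exists>a\<in>topspace X. stat_conv X x N a)))"

end

theory Submission
  imports Defs
begin

lemma dens_mono: "A \<subseteq> B \<Longrightarrow> dens_n A n \<le> dens_n B n"
  unfolding dens_n_def
  by (intro divide_right_mono) (auto intro!: card_mono)

lemma dens_nonneg: "0 \<le> dens_n A n"
  unfolding dens_n_def by simp

lemma dz_subset: "A \<subseteq> B \<Longrightarrow> density_zero B \<Longrightarrow> density_zero A"
  unfolding density_zero_def
  by (rule tendsto_sandwich[of "\<lambda>_. 0" _ _ "\<lambda>n. dens_n B n"])
     (auto simp: dens_nonneg dens_mono)

lemma dens_Un: "dens_n (A \<union> B) n \<le> dens_n A n + dens_n B n"
proof -
  have "card ((A \<union> B) \<inter> {1..n}) \<le> card (A \<inter> {1..n}) + card (B \<inter> {1..n})"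
    by (metis Int_Un_distrib2 card_Un_le)
  then show ?thesis unfolding dens_n_def
    by (simp add: add_divide_distrib[symmetric] divide_right_mono)
qed

lemma dz_Un: "density_zero A \<Longrightarrow> density_zero B \<Longrightarrow> density_zero (A \<union> B)"
  unfolding density_zero_def
  apply (rule tendsto_sandwich[of "\<lambda>_. 0" _ _ "\<lambda>n. dens_n A n + dens_n B n"])
  using tendsto_add[of "\<lambda>n. dens_n A n" 0 _ "\<lambda>n. dens_n B n" 0]
  by (auto simp: dens_nonneg dens_Un)

lemma dz_empty: "density_zero {}"
  unfolding density_zero_def dens_n_def by simp

lemma nonthin_UNIV: "nonthin UNIV"
proof -
  have ev: "eventually (\<lambda>n. ereal (dens_n UNIV n) = 1) sequentially"
    using eventually_ge_at_top[of "1::nat"]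
    by eventually_elim (simp add: dens_n_def)
  have "(\<lambda>n. ereal (dens_n UNIV n)) \<longlonglongrightarrow> 1"
    using ev by (rule tendsto_eventually)
  hence "upper_density UNIV = 1"
    unfolding upper_density_def by (intro lim_imp_Limsup) auto
  thus ?thesis unfolding nonthin_def by simp
qed

theorem mainTheorem10:
  fixes X :: "'a topology" and K :: "'a set"
  assumes "stat_closed (prod_topology X X) {(x, x) | x. x \<in> topspace X}"
    and "K \<subseteq> topspace X"
    and "stat_compact (subtopology X K)"
  shows "stat_closed X K"
  unfolding stat_closed_def
proof
  show "stat_closure X K \<subseteq> K"
  proof
    fix a assume "a \<in> stat_closure X K"
    then obtain x M where a: "a \<in> topspace X" and M: "nonthin M" and xK: "\<forall>n\<in>M. x n \<in> K"
      and sc: "stat_conv X x M a" unfolding stat_closure_def by blast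
    obtain N b where NM: "N \<subseteq> M" and N: "nonthin N" and bK: "b \<in> topspace (subtopology X K)"
      and scb: "stat_conv (subtopology X K) x N b"
    proof -
      have "\<forall>n\<in>M. x n \<in> topspace (subtopology X K)" using xK assms(2) by auto
      from assms(3)[unfolded stat_compact_def, rule_format, OF conjI[OF M this]]
      show ?thesis using that by blast
    qed
    have b: "b \<in> K" "b \<in> topspace X" using bK assms(2) by auto
    have ca: "density_zero {n \<in> N. x n \<notin> U}" if "openin X U" "a \<in> U" for U
    proof -
      have "density_zero {n \<in> M. x n \<notin> U}" using sc that unfolding stat_conv_def by blast
      moreover have "{n \<in> N. x n \<notin> U} \<subseteq> {n \<in> M. x n \<notin> U}" using NM by auto
      ultimately show ?thesis using dz_subset by blast
    qed
    have cb: "density_zero {n \<in> N. x n \<notin> U}" if "openin X U" "b \<in> U" for U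
    proof -
      have "openin (subtopology X K) (U \<inter> K)" using that by (auto simp: openin_subtopology)
      hence "density_zero {n \<in> N. x n \<notin> U \<inter> K}" using scb that b unfolding stat_conv_def by blast
      moreover have "{n \<in> N. x n \<notin> U \<inter> K} = {n \<in> N. x n \<notin> U}" using xK NM by auto
      ultimately show ?thesis by simp
    qed
    define D where "D = {(y, y) | y. y \<in> topspace X}"
    have "stat_conv (prod_topology X X) (\<lambda>n. (x n, x n)) N (a, b)"
      unfolding stat_conv_def
    proof (intro conjI allI impI)
      show "nonthin N" by fact
      show "\<forall>n\<in>N. (x n, x n) \<in> topspace (prod_topology X X)" using xK NM assms(2) by auto
      show "(a, b) \<in> topspace (prod_topology X X)" using a b by auto
    next
      fix W assume W: "openin (prod_topology X X) W \<and> (a, b) \<in> W"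
      then obtain U V where UV: "openin X U" "openin X V" "a \<in> U" "b \<in> V" "U \<times> V \<subseteq> W"
        unfolding openin_prod_topology_alt by blast
      have "{n \<in> N. (x n, x n) \<notin> W} \<subseteq> {n \<in> N. x n \<notin> U} \<union> {n \<in> N. x n \<notin> V}"
        using UV(5) by auto
      thus "density_zero {n \<in> N. (x n, x n) \<notin> W}"
        using dz_Un[OF ca[OF UV(1,3)] cb[OF UV(2,4)]] by (rule dz_subset)
    qed
    moreover have "\<forall>n\<in>N. (x n, x n) \<in> D" using xK NM assms(2) unfolding D_def by auto
    ultimately have "(a, b) \<in> stat_closure (prod_topology X X) D"
      unfolding stat_closure_def using N a b by (intro CollectI conjI exI[of _ "\<lambda>n. (x n, x n)"] exI[of _ N]) auto
    hence "(a, b) \<in> D" using assms(1) unfolding stat_closed_def D_def by simp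
    thus "a \<in> K" using b unfolding D_def by auto
  qed
next
  show "K \<subseteq> stat_closure X K"
  proof
    fix a assume aK: "a \<in> K"
    have "stat_conv X (\<lambda>_. a) UNIV a"
      unfolding stat_conv_def using nonthin_UNIV aK assms(2) by (auto simp: dz_empty)
    thus "a \<in> stat_closure X K"
      unfolding stat_closure_def using nonthin_UNIV aK assms(2) by (intro CollectI conjI exI[of _ "\<lambda>_. a"] exI[of _ UNIV]) auto
  qed
qed

end
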